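(* Let $n\ge 1$ be an integer and suppose that $A\subseteq\mathbb{Z}_5^n$ is sum-free. If $|A|>\frac32\cdot5^{n-1}$ and $A$ is contained in a union of two cosets of a proper subgroup $H<\mathbb{Z}_5^n$, then there is an element $e\notin H$ such that $A\subseteq(e+H)\cup(-e+H)$.
   Context: $\mathbb{Z}_5^n$ denotes the elementary abelian $5$-group of rank $n$. A subset $S$ of an abelian group is sum-free if there are no $x,y,z\in S$ (not necessarily distinct) with $x+y=z$. *)

theory Defs
  imports "HOL-Analysis.Finite_Cartesian_Product" "HOL-Library.Numeral_Type"
begin

text \<open>The ambient group Z_5^n is modelled as the vector type 5 ^ 'n, where 'n is a
finite index type with CARD('n) = n (so n >= 1 automatically) and 5 is the ring Z/5Z.\<close>

definition sum_free :: "'a::plus set \<Rightarrow> bool" where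
  "sum_free S \<longleftrightarrow> (\<forall>x\<in>S. \<forall>y\<in>S. \<forall>z\<in>S. x + y \<noteq> z)"

definition is_subgroup :: "'a::ab_group_add set \<Rightarrow> bool" where
  "is_subgroup H \<longleftrightarrow> 0 \<in> H \<and> (\<forall>x\<in>H. \<forall>y\<in>H. x + y \<in> H) \<and> (\<forall>x\<in>H. - x \<in> H)"

definition coset :: "'a::plus \<Rightarrow> 'a set \<Rightarrow> 'a set" where
  "coset e H = (\<lambda>h. e + h) ` H"

end

theory Submission imports Defs begin

lemma coset_mem: "(w::'a::ab_group_add) \<in> coset e H \<longleftrightarrow> w - e \<in> H"
  unfolding coset_def image_iff by (auto intro!: bexI[of _ "w - e"])

lemma card_coset: "card (coset e (H::'a::ab_group_add set)) = card H"
  unfolding coset_def by (rule card_image) (auto simp: inj_on_def)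

lemma sg_diff: "is_subgroup H \<Longrightarrow> x \<in> H \<Longrightarrow> y \<in> H \<Longrightarrow> x - y \<in> H"
  unfolding is_subgroup_def by (metis diff_conv_add_uminus)

lemma sg_add: "is_subgroup H \<Longrightarrow> x \<in> H \<Longrightarrow> y \<in> H \<Longrightarrow> x + y \<in> H"
  unfolding is_subgroup_def by blast

lemma sg_neg: "is_subgroup H \<Longrightarrow> x \<in> H \<Longrightarrow> - x \<in> H"
  unfolding is_subgroup_def by blast

lemma sg_nat: "is_subgroup H \<Longrightarrow> x \<in> H \<Longrightarrow> of_nat k * (x::'a::ring_1) \<in> H"
proof (induction k)
  case 0 then show ?case by (simp add: is_subgroup_def)
next
  case (Suc k)
  have "of_nat (Suc k) * x = x + of_nat k * x" by (simp add: distrib_right)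
  then show ?case using Suc sg_add by metis
qed

lemma sg_int: assumes "is_subgroup H" "x \<in> H" shows "of_int k * (x::'a::ring_1) \<in> H"
proof (cases k rule: int_cases)
  case (nonneg n) then show ?thesis using sg_nat assms by (metis of_int_of_nat_eq)
next
  case (neg n)
  have "- (of_nat (Suc n) * x) \<in> H" using sg_nat[OF assms] sg_neg[OF assms(1)] by blast
  moreover have "(of_int k::'a) = - of_nat (Suc n)" using neg by simp
  ultimately show ?thesis by (metis mult_minus_left)
qed

lemma mod5: "(5::'a::ring_1) = 0 \<Longrightarrow> of_int m * (x::'a) = of_int (m mod 5) * x"
proof -
  assume h: "(5::'a) = 0"
  have "m = m mod 5 + 5 * (m div 5)" by simp
  then have "(of_int m::'a) = of_int (m mod 5) + 5 * of_int (m div 5)"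
    by (metis of_int_add of_int_mult of_int_numeral)
  then show ?thesis using h by simp
qed

lemma inv5: "(d::int) mod 5 \<noteq> 0 \<Longrightarrow> \<exists>c. (c * d) mod 5 = 1"
proof -
  assume "d mod 5 \<noteq> 0"
  then have "d mod 5 \<in> {1,2,3,4}" by auto
  then have "\<exists>c. (c * (d mod 5)) mod 5 = 1"
  proof (elim insertE)
    assume "d mod 5 = 1" then show ?thesis by (intro exI[of _ 1]) simp
  next
    assume "d mod 5 = 2" then show ?thesis by (intro exI[of _ 3]) simp
  next
    assume "d mod 5 = 3" then show ?thesis by (intro exI[of _ 2]) simp
  next
    assume "d mod 5 = 4" then show ?thesis by (intro exI[of _ 4]) simp
  qed auto
  then obtain c where "(c * (d mod 5)) mod 5 = 1" by blast
  then show ?thesis by (metis mod_mult_right_eq)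
qed

lemma diff5: "0 \<le> i \<Longrightarrow> i \<le> 4 \<Longrightarrow> 0 \<le> j \<Longrightarrow> j \<le> (4::int) \<Longrightarrow> i \<noteq> j \<Longrightarrow> (i - j) mod 5 \<noteq> 0"
  by (auto simp: dvd_def) presburger

lemma ext_sg:
  fixes K :: "'a::{ring_1,finite} set"
  assumes five: "(5::'a) = 0" and K: "is_subgroup K" and x: "x \<notin> K"
  shows "is_subgroup {of_int i * x + y |i y. y \<in> K}"
    and "5 * card K \<le> card {of_int i * x + y |i y. y \<in> K}"
proof -
  let ?E = "{of_int i * x + y |i y. y \<in> K}"
  show "is_subgroup ?E"
    unfolding is_subgroup_def
  proof (intro conjI ballI)
    show "0 \<in> ?E" using K by (auto simp: is_subgroup_def intro!: exI[of _ 0])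
  next
    fix u v assume "u \<in> ?E" "v \<in> ?E"
    then obtain i y j z where "u = of_int i * x + y" "y \<in> K" "v = of_int j * x + z" "z \<in> K" by auto
    then have "u + v = of_int (i+j) * x + (y + z)" "y + z \<in> K" using K sg_add
      by (auto simp: distrib_right algebra_simps)
    then show "u + v \<in> ?E" by blast
  next
    fix u assume "u \<in> ?E"
    then obtain i y where "u = of_int i * x + y" "y \<in> K" by auto
    then have "- u = of_int (-i) * x + (- y)" "- y \<in> K" using K sg_neg by auto
    then show "- u \<in> ?E" by blast
  qed
  define C where "C i = coset (of_int i * x) K" for i :: int
  have sub: "(\<Union>i\<in>{0..4}. C i) \<subseteq> ?E" unfolding C_def coset_def by auto
  have disj: "C i \<inter> C j = {}" if ij: "i \<in> {0..4}" "j \<in> {0..4}" "i \<noteq> j" for i j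
  proof (rule ccontr)
    assume "C i \<inter> C j \<noteq> {}"
    then obtain w where "w - of_int i * x \<in> K" "w - of_int j * x \<in> K" unfolding C_def by (auto simp: coset_mem)
    then have "(w - of_int j * x) - (w - of_int i * x) \<in> K" using K sg_diff by blast
    then have d: "of_int (i - j) * x \<in> K" by (simp add: algebra_simps)
    have "0 \<le> i" "i \<le> 4" "0 \<le> j" "j \<le> 4" using ij by auto
    then have "(i - j) mod 5 \<noteq> 0" using ij(3) by (rule diff5)
    then obtain c where c: "(c * (i - j)) mod 5 = 1" using inv5 by blast
    have "of_int c * (of_int (i - j) * x) \<in> K" using d K sg_int by blast
    also have "of_int c * (of_int (i - j) * x) = of_int (c * (i-j)) * x" by (simp add: mult.assoc)
    also have "\<dots> = x" using mod5[OF five, of "c*(i-j)" x] c by simp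
    finally show False using x by simp
  qed
  have "card (\<Union>i\<in>{0..4}. C i) = (\<Sum>i\<in>{0..4}. card (C i))"
    by (rule card_UN_disjoint) (use disj in auto)
  also have "\<dots> = 5 * card K" unfolding C_def card_coset by simp
  moreover have "card (\<Union>i\<in>{0..4}. C i) \<le> card ?E" using sub by (intro card_mono) simp_all
  ultimately show "5 * card K \<le> card ?E" by simp
qed

lemma sumset:
  fixes X Y H :: "'a::{ab_group_add,finite} set"
  assumes H: "is_subgroup H" and X: "X \<subseteq> coset x H" and Y: "Y \<subseteq> coset y H"
    and c: "card X + card Y > card H" and z: "z - (x + y) \<in> H"
  shows "\<exists>u\<in>X. \<exists>v\<in>Y. u + v = z"
proof -
  let ?Z = "(\<lambda>v. z - v) ` Y"
  have cZ: "card ?Z = card Y" by (rule card_image) (auto simp: inj_on_def)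
  have "?Z \<subseteq> coset x H"
  proof
    fix w assume "w \<in> ?Z"
    then obtain v where v: "v \<in> Y" "w = z - v" by auto
    then have "v - y \<in> H" using Y coset_mem by blast
    then have "(z - (x + y)) - (v - y) \<in> H" using z H sg_diff by blast
    moreover have "(z - (x + y)) - (v - y) = w - x" using v by (simp add: algebra_simps)
    ultimately show "w \<in> coset x H" using coset_mem by metis
  qed
  then have "X \<union> ?Z \<subseteq> coset x H" using X by auto
  then have "card (X \<union> ?Z) \<le> card (coset x H)" by (intro card_mono) simp_all
  then have "card (X \<union> ?Z) \<le> card H" using card_coset by metis
  moreover have "card (X \<union> ?Z) + card (X \<inter> ?Z) = card X + card ?Z" using card_Un_Int[of X ?Z] by simp
  ultimately have "X \<inter> ?Z \<noteq> {}" using c cZ by auto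
  then obtain u v where "u \<in> X" "v \<in> Y" "u = z - v" by auto
  then show ?thesis by (metis diff_add_cancel)
qed


lemma t3: "(of_int 3::'a::ring_1) * a = a + a + a"
proof -
  have e: "(of_int 3::'a) = 1 + 1 + 1" by simp
  show ?thesis by (simp only: e distrib_right mult_1_left)
qed
lemma t4: "(of_int 4::'a::ring_1) * a = a + a + a + a"
proof -
  have e: "(of_int 4::'a) = 1 + 1 + 1 + 1" by simp
  show ?thesis by (simp only: e distrib_right mult_1_left)
qed
lemma t5: "(5::'a::ring_1) * a = a + a + a + a + a"
proof -
  have e: "(5::'a) = 1 + 1 + 1 + 1 + 1" by simp
  show ?thesis by (simp only: e distrib_right mult_1_left)
qed
lemma tm2: "(of_int (-2)::'a::ring_1) * a = - (a + a)"
proof -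
  have e: "(of_int (-2)::'a) = - (1 + 1)" by simp
  show ?thesis by (simp only: e distrib_right mult_1_left mult_minus_left)
qed
lemma t2: "(of_int 2::'a::ring_1) * a = a + a"
proof -
  have e: "(of_int 2::'a) = 1 + 1" by simp
  show ?thesis by (simp only: e distrib_right mult_1_left)
qed
lemma id3: "of_int (-2) * (b - of_int 3 * a) = a - (b + b) + 5 * (a::'a::ring_1)"
  unfolding right_diff_distrib tm2 t3 t5 by (simp add: algebra_simps)
lemma id4: "b - of_int 4 * a = b + a - 5 * (a::'a::ring_1)" unfolding t4 t5 by (simp add: algebra_simps)

theorem lemma1:
  fixes A H :: "(5 ^ 'n) set"
  assumes "sum_free A"
    and "real (card A) > 3 / 2 * 5 ^ (CARD('n) - 1)"
    and "is_subgroup H" and "H \<noteq> UNIV"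
    and "\<exists>a b. A \<subseteq> coset a H \<union> coset b H"
  shows "\<exists>e. e \<notin> H \<and> A \<subseteq> coset e H \<union> coset (- e) H"
proof -
  let ?N = "CARD(5^'n)"
  let ?h = "card H"
  note Hs = assms(3)
  obtain a b where ab: "A \<subseteq> coset a H \<union> coset b H" using assms(5) by blast
  have five: "(5::5^'n) = 0" by (simp add: vec_eq_iff)
  have "CARD('n) \<noteq> 0" by simp
  then obtain m where m: "CARD('n) = Suc m" using not0_implies_Suc by blast
  have N: "?N = 5 * 5 ^ m" using m by simp
  have "real (10 * card A) > real (3 * ?N)" using assms(2) m N by simp
  then have cA: "10 * card A > 3 * ?N" by linarith
  obtain x0 where x0: "x0 \<notin> H" using assms(4) by blast
  have "5 * ?h \<le> card {of_int i * x0 + y |i y. y \<in> H}" using ext_sg(2)[OF _ Hs x0] five by simp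
  also have "\<dots> \<le> ?N" by (rule card_mono) simp_all
  finally have hN: "5 * ?h \<le> ?N" .
  define A1 where "A1 = A \<inter> coset a H"
  define A2 where "A2 = A \<inter> coset b H"
  have "A = A1 \<union> A2" using ab unfolding A1_def A2_def by blast
  then have cA12: "card A \<le> card A1 + card A2" by (metis card_Un_le)
  have c1: "card A1 \<le> ?h" using card_mono[of "coset a H" A1] card_coset[of a H] unfolding A1_def by simp
  have c2: "card A2 \<le> ?h" using card_mono[of "coset b H" A2] card_coset[of b H] unfolding A2_def by simp
  have h1: "2 * card A1 > ?h" using cA cA12 c2 hN by linarith
  have h2: "2 * card A2 > ?h" using cA cA12 c1 hN by linarith
  have nf: "z - (x + y) \<notin> H" if XY: "X \<subseteq> A" "Y \<subseteq> A" "X \<subseteq> coset x H" "Y \<subseteq> coset y H"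
     "card X + card Y > ?h" "z \<in> A" for X Y x y z
  proof
    assume "z - (x + y) \<in> H"
    then obtain u v where "u \<in> X" "v \<in> Y" "u + v = z" using sumset[OF Hs XY(3,4,5)] by blast
    then show False using assms(1) XY unfolding sum_free_def by blast
  qed
  have s1: "A1 \<subseteq> A" "A1 \<subseteq> coset a H" "A2 \<subseteq> A" "A2 \<subseteq> coset b H" unfolding A1_def A2_def by auto
  have naa: "z - (a + a) \<notin> H" if "z \<in> A" for z using nf[OF s1(1,1,2,2) _ that] h1 by simp
  have nbb: "z - (b + b) \<notin> H" if "z \<in> A" for z using nf[OF s1(3,3,4,4) _ that] h2 by simp
  have "A1 \<noteq> {}" using h1 by auto
  then obtain u where u: "u \<in> A" "u - a \<in> H" unfolding A1_def by (auto simp: coset_mem)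
  have "A2 \<noteq> {}" using h2 by auto
  then obtain w where w: "w \<in> A" "w - b \<in> H" unfolding A2_def by (auto simp: coset_mem)
  have na: "a \<notin> H"
  proof
    assume "a \<in> H"
    then have "(u - a) - a \<in> H" using u sg_diff[OF Hs] by blast
    then show False using naa[OF u(1)] by (simp add: algebra_simps)
  qed
  have nb: "b \<notin> H"
  proof
    assume "b \<in> H"
    then have "(w - b) - b \<in> H" using w sg_diff[OF Hs] by blast
    then show False using nbb[OF w(1)] by (simp add: algebra_simps)
  qed
  have nab: "a - (b + b) \<notin> H"
  proof
    assume "a - (b + b) \<in> H"
    then have "(u - a) + (a - (b + b)) \<in> H" using u sg_add[OF Hs] by blast
    then show False using nbb[OF u(1)] by (simp add: algebra_simps)
  qed
  have nba: "b - (a + a) \<notin> H"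
  proof
    assume "b - (a + a) \<in> H"
    then have "(w - b) + (b - (a + a)) \<in> H" using w sg_add[OF Hs] by blast
    then show False using naa[OF w(1)] by (simp add: algebra_simps)
  qed
  have nb1: "b - a \<notin> H"
  proof
    assume ba: "b - a \<in> H"
    have "A \<subseteq> coset a H"
    proof
      fix z assume "z \<in> A"
      then have "z - a \<in> H \<or> z - b \<in> H" using ab by (auto simp: coset_mem)
      moreover have "z - b \<in> H \<Longrightarrow> z - a \<in> H"
        using sg_add[OF Hs _ ba, of "z - b"] by (simp add: algebra_simps)
      ultimately show "z \<in> coset a H" by (auto simp: coset_mem)
    qed
    then have "card A \<le> ?h" using card_mono[of "coset a H" A] card_coset[of a H] by simp
    then show False using cA hN by linarith
  qed
  define Ha where "Ha = {of_int i * a + y |i y. y \<in> H}"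
  have Has: "is_subgroup Ha" and Hac: "5 * ?h \<le> card Ha" using ext_sg[OF five Hs na] unfolding Ha_def by auto
  have "b \<in> Ha"
  proof (rule ccontr)
    assume "b \<notin> Ha"
    then have "5 * card Ha \<le> card {of_int i * b + y |i y. y \<in> Ha}" using ext_sg(2)[OF five Has] by simp
    also have "\<dots> \<le> ?N" by (rule card_mono) simp_all
    finally show False using Hac cA cA12 c1 c2 by linarith
  qed
  then obtain i y where iy: "b = of_int i * a + y" "y \<in> H" unfolding Ha_def by blast
  define r where "r = i mod 5"
  have "of_int i * a = of_int r * a" unfolding r_def by (rule mod5[OF five])
  then have br: "b - of_int r * a \<in> H" using iy by simp
  have "0 \<le> r" "r < 5" unfolding r_def by simp_all
  then have r04: "r = 0 \<or> r = 1 \<or> r = 2 \<or> r = 3 \<or> r = 4" by presburger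
  have a5: "5 * a = 0" using five by simp
  have bapH: "b + a \<in> H"
  proof -
    { assume "r = 0" then have False using br nb by simp }
    moreover { assume "r = 1" then have False using br nb1 by simp }
    moreover { assume r2: "r = 2"
      have "b - (a + a) \<in> H" using br unfolding r2 t2 .
      then have False using nba by blast }
    moreover { assume r3: "r = 3"
      have "of_int (-2) * (b - of_int 3 * a) \<in> H" using sg_int[OF Hs br[unfolded r3]] by blast
      then have "a - (b + b) + 5 * a \<in> H" unfolding id3 .
      then have False using nab a5 by simp }
    moreover { assume r4: "r = 4"
      have "b + a - 5 * a \<in> H" using br unfolding r4 id4 .
      then have "b + a \<in> H" using a5 by simp }
    ultimately show ?thesis using r04 by blast
  qed
  have "A \<subseteq> coset a H \<union> coset (- a) H"
  proof
    fix z assume "z \<in> A"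
    then have "z - a \<in> H \<or> z - b \<in> H" using ab by (auto simp: coset_mem)
    moreover have "z - b \<in> H \<Longrightarrow> z - (- a) \<in> H"
      using sg_add[OF Hs _ bapH, of "z - b"] by (simp add: algebra_simps)
    ultimately show "z \<in> coset a H \<union> coset (- a) H" by (auto simp: coset_mem)
  qed
  then show ?thesis using na by blast
qed

end
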